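(* Let $\mathbb{F}$ be a field and let $m,n,r,d$ be integers with $m,n\ge2$, $d\ge1$ and $0<r<\min\{m,n\}$. Then $$\mathbb{F}[\lambda]^{m\times n}_{d,r}=\Big\{L(\lambda)R(\lambda): L\in\mathbb{F}[\lambda]^{m\times r},\ R\in\mathbb{F}[\lambda]^{r\times n},\ \deg(L_{*i})\le d,\ \deg(R_{i*})\le d,\ \deg(L_{*i})+\deg(R_{i*})\le d\ \text{for } i=1,\dots,r\Big\}.$$
   Context: $\mathbb{F}[\lambda]^{m\times n}_{d,r}$ is the set of $m\times n$ polynomial matrices over $\mathbb{F}$ of degree at most $d$ and normal rank (rank over $\mathbb{F}(\lambda)$) at most $r$. Degree of a polynomial vector: maximum degree of its entries, with $\deg 0=-\infty$. $L_{*i}$ is the $i$th column of $L$ and $R_{i*}$ the $i$th row of $R$. *)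

theory Defs
  imports "Jordan_Normal_Form.DL_Rank"
    "HOL-Computational_Algebra.Polynomial"
    "HOL-Computational_Algebra.Fraction_Field"
    "HOL-Library.Extended_Real"
begin

definition pdeg :: "'a::zero poly \<Rightarrow> ereal" where
  "pdeg p = (if p = 0 then -\<infinity> else ereal (real (degree p)))"

definition vdeg :: "'a::zero poly vec \<Rightarrow> ereal" where
  "vdeg v = (SUP i\<in>{..<dim_vec v}. pdeg (v $ i))"

definition mdeg :: "'a::zero poly mat \<Rightarrow> ereal" where
  "mdeg A = (SUP p\<in>{A $$ (i,j) | i j. i < dim_row A \<and> j < dim_col A}. pdeg p)"

definition normal_rank :: "'a::field poly mat \<Rightarrow> nat" where
  "normal_rank A = vec_space.rank (dim_row A) (map_mat to_fract A)"

definition poly_mats_dr :: "nat \<Rightarrow> nat \<Rightarrow> nat \<Rightarrow> nat \<Rightarrow> 'a::field poly mat set" where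
  "poly_mats_dr m n d r =
     {A. A \<in> carrier_mat m n \<and> mdeg A \<le> ereal (real d) \<and> normal_rank A \<le> r}"

end

theory Submission
  imports Defs
begin


definition nzv :: "nat \<Rightarrow> (nat \<Rightarrow> 'a::zero poly) \<Rightarrow> bool" where
  "nzv m v \<longleftrightarrow> (\<exists>t<m. v t \<noteq> 0)"

definition vdg :: "nat \<Rightarrow> (nat \<Rightarrow> 'a::zero poly) \<Rightarrow> nat" where
  "vdg m v = Max (insert 0 ((\<lambda>t. degree (v t)) ` {..<m}))"

definition lcv :: "nat \<Rightarrow> (nat \<Rightarrow> 'a::zero poly) \<Rightarrow> nat \<Rightarrow> 'a" where
  "lcv m v t = coeff (v t) (vdg m v)"

definition plc :: "(nat \<Rightarrow> 'a::comm_semiring_0 poly) \<Rightarrow> (nat \<Rightarrow> 'a poly) list \<Rightarrow> nat \<Rightarrow> 'a poly" where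
  "plc c H t = (\<Sum>i<length H. c i * (H!i) t)"

definition inspan :: "(nat \<Rightarrow> 'a::comm_semiring_0 poly) \<Rightarrow> (nat \<Rightarrow> 'a poly) list \<Rightarrow> bool" where
  "inspan g H \<longleftrightarrow> (\<exists>c. g = plc c H)"

definition cred :: "nat \<Rightarrow> (nat \<Rightarrow> 'a::comm_semiring_0 poly) list \<Rightarrow> bool" where
  "cred m H \<longleftrightarrow> (\<forall>a::nat\<Rightarrow>'a. (\<forall>i<length H. \<not> nzv m (H!i) \<longrightarrow> a i = 0) \<longrightarrow>
     (\<forall>t<m. (\<Sum>i<length H. a i * lcv m (H!i) t) = 0) \<longrightarrow> (\<forall>i<length H. a i = 0))"

definition mu :: "nat \<Rightarrow> (nat \<Rightarrow> 'a::zero poly) list \<Rightarrow> nat" where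
  "mu m H = (\<Sum>i<length H. if nzv m (H!i) then Suc (vdg m (H!i)) else 0)"

lemma vdg_ge: "t < m \<Longrightarrow> degree (v t) \<le> vdg m v"
  unfolding vdg_def by (rule Max_ge) auto

lemma vdg_le_iff: "vdg m v \<le> k \<longleftrightarrow> (\<forall>t<m. degree (v t) \<le> k)"
  unfolding vdg_def by (subst Max_le_iff) auto

lemma inspan_elem: "i < length (H :: (nat \<Rightarrow> 'a::field poly) list) \<Longrightarrow> inspan (H!i) H"
proof -
  assume i: "i < length H"
  have "H!i = plc (\<lambda>j. if j = i then 1 else 0) H"
  proof
    fix t
    have "plc (\<lambda>j. if j = i then 1 else 0) H t = (\<Sum>j<length H. if j = i then (H!j) t else 0)"
      unfolding plc_def by (rule sum.cong) auto
    also have "\<dots> = (H!i) t" using i by (simp add: sum.delta)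
    finally show "(H!i) t = plc (\<lambda>j. if j = i then 1 else 0) H t" by simp
  qed
  then show ?thesis unfolding inspan_def by blast
qed

lemma inspan_trans:
  assumes "inspan g H2" "\<forall>i<length H2. inspan (H2!i) H"
  shows "inspan g H"
proof -
  obtain c where g: "g = plc c H2" using assms(1) inspan_def by blast
  have "\<forall>i. \<exists>e. i < length H2 \<longrightarrow> H2!i = plc e H" using assms(2) inspan_def by blast
  then obtain d where d: "\<And>i. i < length H2 \<Longrightarrow> H2!i = plc (d i) H" by metis
  have "g = plc (\<lambda>j. \<Sum>i<length H2. c i * d i j) H"
  proof
    fix t
    have "g t = (\<Sum>i<length H2. c i * (\<Sum>j<length H. d i j * (H!j) t))"
      unfolding g plc_def by (intro sum.cong refl) (simp add: d plc_def)
    also have "\<dots> = (\<Sum>i<length H2. \<Sum>j<length H. c i * d i j * (H!j) t)"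
      by (simp add: sum_distrib_left mult.assoc)
    also have "\<dots> = (\<Sum>j<length H. \<Sum>i<length H2. c i * d i j * (H!j) t)"
      by (rule sum.swap)
    also have "\<dots> = plc (\<lambda>j. \<Sum>i<length H2. c i * d i j) H t"
      unfolding plc_def by (simp add: sum_distrib_right)
    finally show "g t = plc (\<lambda>j. \<Sum>i<length H2. c i * d i j) H t" .
  qed
  then show ?thesis unfolding inspan_def by blast
qed

lemma coeff_mult_deg_bound:
  fixes p q :: "'a::idom poly"
  assumes "degree q \<le> e"
  shows "coeff (p * q) (degree p + e) = lead_coeff p * coeff q e"
proof (cases "degree q = e")
  case True then show ?thesis using coeff_mult_degree_sum by metis
next
  case False
  then have lt: "degree q < e" using assms by auto
  then have "coeff q e = 0" by (simp add: coeff_eq_0)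
  moreover have "coeff (p * q) (degree p + e) = 0"
    by (rule coeff_eq_0) (use degree_mult_le[of p q] lt in linarith)
  ultimately show ?thesis by simp
qed

lemma coeff_mult_deg_bound0:
  fixes p q :: "'a::idom poly"
  assumes "degree q \<le> e" "degree p + e < D"
  shows "coeff (p * q) D = 0"
  by (rule coeff_eq_0) (use degree_mult_le[of p q] assms in linarith)


lemma reduce:
  fixes H :: "(nat \<Rightarrow> 'a::field poly) list"
  shows "\<exists>H'. (\<forall>i<length H. inspan (H!i) H') \<and> (\<forall>i<length H'. inspan (H'!i) H) \<and> cred m H'"
proof (induction "mu m H" arbitrary: H rule: less_induct)
  case less
  show ?case
  proof (cases "cred m H")
    case True then show ?thesis using inspan_elem by blast
  next
    case False
    then obtain a where a0: "\<forall>i<length H. \<not> nzv m (H!i) \<longrightarrow> a i = 0"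
      and asum: "\<forall>t<m. (\<Sum>i<length H. a i * lcv m (H!i) t) = 0"
      and ex: "\<exists>i<length H. a i \<noteq> 0" unfolding cred_def by blast
    define J where "J = {i. i < length H \<and> a i \<noteq> 0}"
    have finJ: "finite J" unfolding J_def by auto
    have neJ: "J \<noteq> {}" using ex unfolding J_def by auto
    define E where "E = Max ((\<lambda>i. vdg m (H!i)) ` J)"
    have "E \<in> (\<lambda>i. vdg m (H!i)) ` J"
      using Max_in[of "(\<lambda>i. vdg m (H!i)) ` J"] finJ neJ unfolding E_def by auto
    then obtain k where kJ: "k \<in> J" and kE: "vdg m (H!k) = E" by auto
    have eJ: "\<And>i. i \<in> J \<Longrightarrow> vdg m (H!i) \<le> E" unfolding E_def using finJ by auto
    have k: "k < length H" "a k \<noteq> 0" using kJ unfolding J_def by auto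
    have nzk: "nzv m (H!k)" using a0 k by auto
    define c where "c i = (if i \<in> J then monom (a i / a k) (E - vdg m (H!i)) else 0)" for i
    define h' where "h' = plc c H"
    define H2 where "H2 = H[k := h']"
    have deg: "degree (h' t) \<le> E" if t: "t < m" for t
      unfolding h'_def plc_def
    proof (rule degree_sum_le)
      fix i assume "i \<in> {..<length H}"
      show "degree (c i * (H!i) t) \<le> E"
      proof (cases "i \<in> J")
        case True
        have "degree (c i * (H!i) t) \<le> degree (c i) + degree ((H!i) t)" by (rule degree_mult_le)
        also have "\<dots> \<le> (E - vdg m (H!i)) + vdg m (H!i)"
          using True vdg_ge[OF t, of "H!i"] degree_monom_le[of "a i / a k" "E - vdg m (H!i)"]
          unfolding c_def by auto
        also have "\<dots> = E" using eJ[OF True] by simp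
        finally show ?thesis .
      qed (simp add: c_def)
    qed simp
    have cf: "coeff (h' t) E = 0" if t: "t < m" for t
    proof -
      have "coeff (h' t) E = (\<Sum>i<length H. coeff (c i * (H!i) t) E)"
        unfolding h'_def plc_def by (simp add: coeff_sum)
      also have "\<dots> = (\<Sum>i<length H. (1 / a k) * (a i * lcv m (H!i) t))"
      proof (rule sum.cong[OF refl])
        fix i assume i: "i \<in> {..<length H}"
        show "coeff (c i * (H!i) t) E = (1 / a k) * (a i * lcv m (H!i) t)"
        proof (cases "i \<in> J")
          case True
          have E: "E = (E - vdg m (H!i)) + vdg m (H!i)" using eJ[OF True] by simp
          have "coeff (c i * (H!i) t) E = coeff (monom (a i / a k) (E - vdg m (H!i)) * (H!i) t) ((E - vdg m (H!i)) + vdg m (H!i))"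
            using True E unfolding c_def by simp
          also have "\<dots> = (a i / a k) * lcv m (H!i) t" unfolding coeff_monom_mult lcv_def by simp
          finally show ?thesis by simp
        next
          case False
          then have "a i = 0" using i unfolding J_def by auto
          then show ?thesis using False unfolding c_def by simp
        qed
      qed
      also have "\<dots> = (1 / a k) * (\<Sum>i<length H. a i * lcv m (H!i) t)"
        by (simp add: sum_distrib_left)
      also have "\<dots> = 0" using asum t by simp
      finally show ?thesis .
    qed
    have small: "h' t = 0 \<or> degree (h' t) < E" if t: "t < m" for t
    proof (rule ccontr)
      assume "\<not> (h' t = 0 \<or> degree (h' t) < E)"
      then have "h' t \<noteq> 0" "degree (h' t) = E" using deg[OF t] by auto
      then show False using cf[OF t] leading_coeff_0_iff[of "h' t"] by metis
    qed
    have fh: "(if nzv m h' then Suc (vdg m h') else 0) < Suc (vdg m (H!k))"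
    proof (cases "nzv m h'")
      case True
      then obtain t0 where t0: "t0 < m" "h' t0 \<noteq> 0" unfolding nzv_def by auto
      then have E0: "0 < E" using small by fastforce
      have "vdg m h' \<le> E - 1" unfolding vdg_le_iff using small by fastforce
      then show ?thesis using True E0 kE by simp
    qed simp
    have mu_lt: "mu m H2 < mu m H"
    proof -
      let ?f = "\<lambda>v. if nzv m v then Suc (vdg m v) else 0"
      have len: "length H2 = length H" unfolding H2_def by simp
      have "mu m H2 = (\<Sum>i<length H. ?f (H2!i))" unfolding mu_def len ..
      also have "\<dots> < (\<Sum>i<length H. ?f (H!i))"
      proof (rule sum_strict_mono_ex1)
        show "\<forall>i\<in>{..<length H}. ?f (H2!i) \<le> ?f (H!i)"
        proof
          fix i assume "i \<in> {..<length H}"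
          show "?f (H2!i) \<le> ?f (H!i)"
          proof (cases "i = k")
            case True then show ?thesis using fh nzk k unfolding H2_def by (simp split: if_splits)
          next
            case False then show ?thesis unfolding H2_def by simp
          qed
        qed
        show "\<exists>i\<in>{..<length H}. ?f (H2!i) < ?f (H!i)"
          using fh nzk k unfolding H2_def by (intro bexI[of _ k]) auto
      qed simp
      also have "\<dots> = mu m H" unfolding mu_def ..
      finally show ?thesis .
    qed
    obtain H' where H'1: "\<forall>i<length H2. inspan (H2!i) H'" and H'2: "\<forall>i<length H'. inspan (H'!i) H2"
      and H'3: "cred m H'" using less(1)[OF mu_lt] by blast
    have H2H: "\<forall>i<length H2. inspan (H2!i) H"
    proof (intro allI impI)
      fix i assume i: "i < length H2"
      show "inspan (H2!i) H"
      proof (cases "i = k")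
        case True then show ?thesis using k unfolding H2_def h'_def inspan_def by auto
      next
        case False then show ?thesis using i inspan_elem[of i H] unfolding H2_def by auto
      qed
    qed
    have ck: "c k = 1" using kJ kE k unfolding c_def by simp
    have HH2: "\<forall>i<length H. inspan (H!i) H2"
    proof (intro allI impI)
      fix i assume i: "i < length H"
      show "inspan (H!i) H2"
      proof (cases "i = k")
        case False then show ?thesis using i inspan_elem[of i H2] unfolding H2_def by auto
      next
        case True
        define c2 where "c2 j = (if j = k then 1 else - c j)" for j
        have "H!k = plc c2 H2"
        proof
          fix t
          have fin: "finite {..<length H}" by simp
          have kk: "k \<in> {..<length H}" using k by simp
          have len2: "length H2 = length H" unfolding H2_def by simp
          have "plc c2 H2 t = c2 k * (H2!k) t + (\<Sum>j\<in>{..<length H} - {k}. c2 j * (H2!j) t)"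
            unfolding plc_def len2 by (rule sum.remove[OF fin kk])
          also have "(\<Sum>j\<in>{..<length H} - {k}. c2 j * (H2!j) t) = (\<Sum>j\<in>{..<length H} - {k}. c2 j * (H!j) t)"
            by (rule sum.cong) (auto simp: H2_def)
          also have "(\<Sum>j\<in>{..<length H} - {k}. c2 j * (H!j) t) = - (\<Sum>j\<in>{..<length H} - {k}. c j * (H!j) t)"
            unfolding sum_negf[symmetric] by (rule sum.cong) (auto simp: c2_def)
          also have "c2 k * (H2!k) t = h' t" using k by (simp add: c2_def H2_def)
          also have "h' t = c k * (H!k) t + (\<Sum>j\<in>{..<length H} - {k}. c j * (H!j) t)"
            unfolding h'_def plc_def using sum.remove[OF fin kk] by simp
          finally show "(H!k) t = plc c2 H2 t" using ck by (simp add: algebra_simps)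
        qed
        then show ?thesis using True unfolding inspan_def by blast
      qed
    qed
    show ?thesis
    proof (intro exI conjI)
      show "\<forall>i<length H. inspan (H!i) H'"
        using HH2 H'1 inspan_trans by blast
      show "\<forall>i<length H'. inspan (H'!i) H"
        using H'2 H2H inspan_trans by blast
    qed (rule H'3)
  qed
qed


lemma pd:
  fixes H :: "(nat \<Rightarrow> 'a::field poly) list"
  assumes cr: "cred m H" and i0: "i0 < length H" "nzv m (H!i0)" "c i0 \<noteq> 0"
    and v: "\<forall>t<m. v t = plc c H t"
  shows "nzv m v \<and> degree (c i0) + vdg m (H!i0) \<le> vdg m v"
proof -
  define S where "S = {i. i < length H \<and> nzv m (H!i) \<and> c i \<noteq> 0}"
  define w where "w i = degree (c i) + vdg m (H!i)" for i
  have finS: "finite S" unfolding S_def by auto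
  have i0S: "i0 \<in> S" using i0 unfolding S_def by auto
  define D where "D = Max (w ` S)"
  have wD: "\<And>i. i \<in> S \<Longrightarrow> w i \<le> D" unfolding D_def using finS by auto
  have "D \<in> w ` S" unfolding D_def using finS i0S by (intro Max_in) auto
  then obtain i1 where i1: "i1 \<in> S" "w i1 = D" by auto
  define a where "a i = (if i \<in> S \<and> w i = D then lead_coeff (c i) else 0)" for i
  have coef: "coeff (v t) D = (\<Sum>i<length H. a i * lcv m (H!i) t)" if t: "t < m" for t
  proof -
    have "coeff (v t) D = (\<Sum>i<length H. coeff (c i * (H!i) t) D)"
      using v t unfolding plc_def by (simp add: coeff_sum)
    also have "\<dots> = (\<Sum>i<length H. a i * lcv m (H!i) t)"
    proof (rule sum.cong[OF refl])
      fix i assume i: "i \<in> {..<length H}"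
      show "coeff (c i * (H!i) t) D = a i * lcv m (H!i) t"
      proof (cases "i \<in> S")
        case False
        then have "c i = 0 \<or> (H!i) t = 0" using i t unfolding S_def nzv_def by auto
        then show ?thesis using False unfolding a_def by auto
      next
        case True
        have dg: "degree ((H!i) t) \<le> vdg m (H!i)" using vdg_ge[OF t] .
        show ?thesis
        proof (cases "w i = D")
          case True
          then have "coeff (c i * (H!i) t) D = lead_coeff (c i) * coeff ((H!i) t) (vdg m (H!i))"
            using coeff_mult_deg_bound[OF dg, of "c i"] unfolding w_def by simp
          then show ?thesis using True \<open>i \<in> S\<close> unfolding a_def lcv_def by simp
        next
          case False
          then have "w i < D" using wD[OF \<open>i \<in> S\<close>] by simp
          then have "coeff (c i * (H!i) t) D = 0"
            using coeff_mult_deg_bound0[OF dg] unfolding w_def by simp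
          then show ?thesis using False unfolding a_def by simp
        qed
      qed
    qed
    finally show ?thesis .
  qed
  have "\<not> (\<forall>t<m. (\<Sum>i<length H. a i * lcv m (H!i) t) = 0)"
  proof
    assume z: "\<forall>t<m. (\<Sum>i<length H. a i * lcv m (H!i) t) = 0"
    have "\<forall>i<length H. \<not> nzv m (H!i) \<longrightarrow> a i = 0" unfolding a_def S_def by auto
    then have "\<forall>i<length H. a i = 0" using cr z unfolding cred_def by blast
    moreover have "a i1 \<noteq> 0" "i1 < length H" using i1 unfolding a_def S_def by auto
    ultimately show False by auto
  qed
  then obtain t where t: "t < m" "coeff (v t) D \<noteq> 0" using coef by auto
  then have vt: "v t \<noteq> 0" by auto
  have "D \<le> degree (v t)" using t(2) by (rule le_degree)
  also have "\<dots> \<le> vdg m v" using vdg_ge[OF t(1)] .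
  finally have "D \<le> vdg m v" .
  moreover have "w i0 \<le> D" using wD[OF i0S] .
  ultimately show ?thesis using vt t(1) unfolding nzv_def w_def by auto
qed



lemma (in vec_space) rank_mult_le:
  assumes A: "A \<in> carrier_mat n nc" and X: "X \<in> carrier_mat nc k"
  shows "rank (A * X) \<le> rank A"
proof -
  define W where "W = span (set (cols A))"
  have AX: "A * X \<in> carrier_mat n k" using A X by auto
  have sub1: "set (cols (A * X)) \<subseteq> W"
  proof
    fix x assume "x \<in> set (cols (A * X))"
    then obtain j where j: "j < k" "x = col (A * X) j" using AX
      by (metis cols_length cols_nth carrier_matD(2) in_set_conv_nth)
    have "x = A *\<^sub>v col X j" using j A X by auto
    moreover have "col X j \<in> carrier_vec nc" using X by auto
    ultimately show "x \<in> W" unfolding W_def using col_space_eq[OF A, folded col_space_def] A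
      unfolding col_space_def by auto
  qed
  have sW: "VectorSpace.subspace class_ring W V"
    unfolding W_def using A cols_dim span_is_subspace by (metis carrier_matD(1))
  then have "span (set (cols (A * X))) \<subseteq> W"
    using sub1 span_is_subset by (simp add: VectorSpace.subspace_def)
  moreover have s2: "VectorSpace.subspace class_ring (span (set (cols (A * X)))) V"
    by (metis AX cols_dim carrier_matD(1) span_is_subspace)
  ultimately have subspace: "VectorSpace.subspace class_ring (span (set (cols (A * X)))) (vs W)"
    using nested_subspaces[OF sW s2] by auto
  have fW: "vectorspace.fin_dim class_ring (vs W)" unfolding W_def using A fin_dim_span_cols by auto
  have "vectorspace.fin_dim class_ring (span_vs (set (cols (A * X))))" using AX fin_dim_span_cols by blast
  then show ?thesis unfolding rank_def
    using vectorspace.subspace_dim[OF subspace_is_vs[OF sW] subspace fW] unfolding W_def by auto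
qed

lemma (in vec_space) rank_full_of_ker:
  assumes A: "A \<in> carrier_mat n nc"
    and ker: "\<forall>v\<in>carrier_vec nc. A *\<^sub>v v = 0\<^sub>v n \<longrightarrow> v = 0\<^sub>v nc"
  shows "rank A = nc"
proof -
  have dist: "distinct (cols A)"
  proof (rule ccontr)
    assume "\<not> distinct (cols A)"
    then obtain i j where ij: "i < length (cols A)" "j < length (cols A)" "i \<noteq> j" "cols A ! i = cols A ! j"
      using distinct_conv_nth by blast
    then have ij': "i < nc" "j < nc" "col A i = col A j" using A by auto
    define v where "v = (unit_vec nc i - unit_vec nc j :: 'a vec)"
    have v: "v \<in> carrier_vec nc" unfolding v_def by auto
    have "v $ i = 1" unfolding v_def using ij' ij(3) by auto
    then have "v \<noteq> 0\<^sub>v nc" using ij' by auto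
    moreover have "A *\<^sub>v v = 0\<^sub>v n"
    proof (rule eq_vecI)
      fix t assume "t < dim_vec (0\<^sub>v n :: 'a vec)"
      then have t: "t < n" by simp
      have "(A *\<^sub>v v) $ t = row A t \<bullet> unit_vec nc i - row A t \<bullet> unit_vec nc j"
        unfolding v_def using A t by (simp add: scalar_prod_minus_distrib[of _ nc])
      also have "\<dots> = col A i $ t - col A j $ t" using A t ij'(1,2) by simp
      moreover have "col A i $ t = col A j $ t" using ij'(3) by simp
      ultimately show "(A *\<^sub>v v) $ t = 0\<^sub>v n $ t" using t by simp
    qed (use A in simp)
    ultimately show False using ker v by blast
  qed
  have "lin_indpt (set (cols A))"
  proof
    assume "lin_dep (set (cols A))"
    then obtain v where "v \<in> carrier_vec nc" "v \<noteq> 0\<^sub>v nc" "A *\<^sub>v v = 0\<^sub>v n"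
      using lin_depE[OF A _ dist] by blast
    then show False using ker by blast
  qed
  then show ?thesis using lin_indpt_full_rank[OF A dist] by blast
qed

lemma fract_kernel:
  fixes B :: "'a::idom mat"
  assumes B: "B \<in> carrier_mat nr nc" and ker: "\<forall>w\<in>carrier_vec nc. B *\<^sub>v w = 0\<^sub>v nr \<longrightarrow> w = 0\<^sub>v nc"
  shows "\<forall>v\<in>carrier_vec nc. map_mat to_fract B *\<^sub>v v = 0\<^sub>v nr \<longrightarrow> v = 0\<^sub>v nc"
proof (intro ballI impI, rule ccontr)
  let ?h = "to_fract :: 'a \<Rightarrow> 'a fract"
  let ?A = "map_mat ?h B"
  interpret inj_comm_ring_hom ?h by (unfold_locales, auto)
  fix v assume v: "v \<in> carrier_vec nc" and Av: "?A *\<^sub>v v = 0\<^sub>v nr" and v0: "v \<noteq> 0\<^sub>v nc"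
  let ?n = nc
    have "\<forall> i. \<exists> a b. v $ i = Fraction_Field.Fract a b \<and> b \<noteq> 0" using Fract_cases[of "v $ i" for i] by metis
    from choice[OF this] obtain a where "\<forall> i. \<exists> b. v $ i = Fraction_Field.Fract (a i) b \<and> b \<noteq> 0" by metis
    from choice[OF this] obtain b where vi: "\<And> i. v $ i = Fraction_Field.Fract (a i) (b i)" and bi: "\<And> i. b i \<noteq> 0" by auto
    define m where "m = prod_list (map b [0..<?n])"
    let ?m = "?h m"
    have m0: "m \<noteq> 0" unfolding m_def hom_0_iff prod_list_zero_iff using bi by auto
    from v0[unfolded vec_eq_iff] v obtain i where i: "i < ?n" "v $ i \<noteq> 0" by auto
    {
      fix i
      assume "i < ?n"
      hence "b i \<in> set (map b [0 ..< ?n])" by auto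
      from split_list[OF this]
        obtain ys zs where "map b [0..<?n] = ys @ b i # zs" by auto
      hence "b i dvd m" unfolding m_def by auto
      then obtain c where "m = b i * c" ..
      hence "?m * v $ i = ?h (a i * c)" unfolding vi using bi[of i]
        by (simp add: eq_fract to_fract_def)
      hence "\<exists> c. ?m * v $ i = ?h c" ..
    }
    hence "\<forall> i. \<exists> c. i < ?n \<longrightarrow> ?m * v $ i = ?h c" by auto
    from choice[OF this] obtain c where c: "\<And> i. i < ?n \<Longrightarrow> ?m * v $ i = ?h (c i)" by auto
    define w where "w = vec ?n c"
    have w: "w \<in> carrier_vec ?n" unfolding w_def by simp
    have mvw: "?m \<cdot>\<^sub>v v = map_vec ?h w" unfolding w_def using c v
      by (intro eq_vecI, auto)
    with m0 i c[OF i(1)] have "w $ i \<noteq> 0" unfolding w_def by auto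
    with i w have w0: "w \<noteq> 0\<^sub>v ?n" by auto
    from arg_cong[OF Av, of "\<lambda> v. ?m \<cdot>\<^sub>v v"]
    have "?m \<cdot>\<^sub>v (?A *\<^sub>v v) = map_vec ?h (0\<^sub>v nr)" by auto
    also have "?m \<cdot>\<^sub>v (?A *\<^sub>v v) = ?A *\<^sub>v (?m \<cdot>\<^sub>v v)" using B v by auto
    also have "\<dots> = ?A *\<^sub>v (map_vec ?h w)" unfolding mvw ..
    also have "\<dots> = map_vec ?h (B *\<^sub>v w)" unfolding mult_mat_vec_hom[OF B w] ..
    finally have "B *\<^sub>v w = 0\<^sub>v nr" by (rule vec_hom_inj)
    with w w0 ker show False by blast
qed

lemma map_mat_to_fract_mult:
  fixes A :: "'a::idom mat"
  assumes "A \<in> carrier_mat nr n" "B \<in> carrier_mat n nc"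
  shows "map_mat to_fract (A * B) = map_mat to_fract A * map_mat to_fract B"
proof -
  interpret inj_comm_ring_hom "to_fract :: 'a \<Rightarrow> 'a fract" by (unfold_locales, auto)
  show ?thesis using mat_hom_mult[OF assms] .
qed



lemma pdeg_le: "pdeg p \<le> ereal (real k) \<longleftrightarrow> degree p \<le> k"
  unfolding pdeg_def by auto

lemma pdeg_nz: "p \<noteq> 0 \<Longrightarrow> pdeg p = ereal (real (degree p))"
  unfolding pdeg_def by auto

lemma vdeg_le: "vdeg v \<le> ereal (real k) \<longleftrightarrow> (\<forall>i<dim_vec v. degree (v$i) \<le> k)"
  unfolding vdeg_def SUP_le_iff by (auto simp: pdeg_le)

lemma pdeg_le_vdeg: "i < dim_vec v \<Longrightarrow> pdeg (v$i) \<le> vdeg v"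
  unfolding vdeg_def by (rule SUP_upper) auto

lemma mdeg_le: "mdeg A \<le> ereal (real k) \<longleftrightarrow> (\<forall>i<dim_row A. \<forall>j<dim_col A. degree (A$$(i,j)) \<le> k)"
  unfolding mdeg_def SUP_le_iff by (auto simp: pdeg_le)

lemma mult_entry:
  assumes "L \<in> carrier_mat m r" "R \<in> carrier_mat r n" "t < m" "j < n"
  shows "(L * R) $$ (t, j) = (\<Sum>k<r. L $$ (t, k) * R $$ (k, j))"
  using assms by (simp add: scalar_prod_def atLeast0LessThan)

lemma sup_dir:
  fixes L :: "'a::field poly mat"
  assumes L: "L \<in> carrier_mat m r" and R: "R \<in> carrier_mat r n"
    and cond: "\<forall>i<r. vdeg (col L i) \<le> ereal (real d) \<and> vdeg (row R i) \<le> ereal (real d) \<and>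
              vdeg (col L i) + vdeg (row R i) \<le> ereal (real d)"
  shows "L * R \<in> poly_mats_dr m n d r"
proof -
  have LR: "L * R \<in> carrier_mat m n" using L R by auto
  have deg: "degree ((L * R) $$ (t, j)) \<le> d" if t: "t < m" and j: "j < n" for t j
    unfolding mult_entry[OF L R t j]
  proof (rule degree_sum_le)
    fix k assume k: "k \<in> {..<r}"
    show "degree (L $$ (t, k) * R $$ (k, j)) \<le> d"
    proof (cases "L $$ (t, k) = 0 \<or> R $$ (k, j) = 0")
      case True then show ?thesis by auto
    next
      case False
      have k': "k < r" using k by simp
      have "pdeg (L $$ (t, k)) \<le> vdeg (col L k)"
        using pdeg_le_vdeg[of t "col L k"] L t k' by simp
      moreover have "pdeg (R $$ (k, j)) \<le> vdeg (row R k)"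
        using pdeg_le_vdeg[of j "row R k"] R j k' by simp
      ultimately have "pdeg (L $$ (t, k)) + pdeg (R $$ (k, j)) \<le> ereal (real d)"
        using cond k' by (meson add_mono order_trans)
      then have "degree (L $$ (t, k)) + degree (R $$ (k, j)) \<le> d"
        using False by (simp add: pdeg_nz)
      then show ?thesis using degree_mult_le[of "L $$ (t, k)" "R $$ (k, j)"] by linarith
    qed
  qed simp
  have "normal_rank (L * R) = vec_space.rank m (map_mat to_fract L * map_mat to_fract R)"
    unfolding normal_rank_def using L LR map_mat_to_fract_mult[OF L R] by simp
  also have "\<dots> \<le> vec_space.rank m (map_mat to_fract L)"
    by (rule vec_space.rank_mult_le) (use L R in auto)
  also have "\<dots> \<le> r" by (rule vec_space.rank_le_nc) (use L in auto)
  finally have rk: "normal_rank (L * R) \<le> r" .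
  have "mdeg (L * R) \<le> ereal (real d)" unfolding mdeg_le using LR deg by (metis carrier_matD)
  then show ?thesis unfolding poly_mats_dr_def using LR rk by blast
qed



lemma sub_dir:
  fixes A :: "'a::field poly mat"
  assumes A: "A \<in> carrier_mat m n" and dA: "\<forall>t<m. \<forall>j<n. degree (A $$ (t, j)) \<le> d"
    and rk: "normal_rank A \<le> r"
  shows "\<exists>L R. A = L * R \<and> L \<in> carrier_mat m r \<and> R \<in> carrier_mat r n \<and>
     (\<forall>k<r. \<exists>e\<le>d. (\<forall>t<m. degree (L $$ (t, k)) \<le> e) \<and> (\<forall>j<n. degree (R $$ (k, j)) \<le> d - e))"
proof -
  define G where "G = map (\<lambda>j t. A $$ (t, j)) [0..<n]"
  have lenG: "length G = n" unfolding G_def by simp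
  have Gj: "\<And>j. j < n \<Longrightarrow> G ! j = (\<lambda>t. A $$ (t, j))" unfolding G_def by simp
  obtain H where H1: "\<forall>j<length G. inspan (G!j) H" and H2: "\<forall>i<length H. inspan (H!i) G"
    and cr: "cred m H" using reduce by blast
  have "\<forall>j. \<exists>c. j < n \<longrightarrow> G!j = plc c H" using H1 lenG unfolding inspan_def by auto
  then obtain cc where cc: "\<And>j. j < n \<Longrightarrow> G!j = plc (cc j) H" by metis
  have "\<forall>i. \<exists>x. i < length H \<longrightarrow> H!i = plc x G" using H2 unfolding inspan_def by auto
  then obtain X where X: "\<And>i. i < length H \<Longrightarrow> H!i = plc (X i) G" by metis
  define c' where "c' j i = (if nzv m (H!i) then cc j i else 0)" for j i
  have Aeq: "A $$ (t, j) = plc (c' j) H t" if t: "t < m" and j: "j < n" for t j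
  proof -
    have "A $$ (t, j) = plc (cc j) H t" using cc[OF j] Gj[OF j] by metis
    also have "\<dots> = plc (c' j) H t" unfolding plc_def
    proof (rule sum.cong[OF refl])
      fix i assume "i \<in> {..<length H}"
      show "cc j i * (H!i) t = c' j i * (H!i) t"
        using t unfolding c'_def nzv_def by auto
    qed
    finally show ?thesis .
  qed
  have vdgA: "vdg m (\<lambda>t. A $$ (t, j)) \<le> d" if "j < n" for j
    using dA that unfolding vdg_le_iff by auto
  have PDc: "degree (c' j i) + vdg m (H!i) \<le> d" if j: "j < n" and i: "i < length H" and nz: "c' j i \<noteq> 0" for j i
  proof -
    have nzi: "nzv m (H!i)" using nz unfolding c'_def by (auto split: if_splits)
    have "\<forall>t<m. A $$ (t, j) = plc (c' j) H t" using Aeq j by blast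
    then have "degree (c' j i) + vdg m (H!i) \<le> vdg m (\<lambda>t. A $$ (t, j))"
      using pd[where c = "c' j" and v = "\<lambda>t. A $$ (t, j)", OF cr i nzi nz] by blast
    then show ?thesis using vdgA[OF j] by linarith
  qed
  define used where "used i \<longleftrightarrow> (\<exists>j<n. c' j i \<noteq> 0)" for i
  define idx where "idx = filter used [0..<length H]"
  define s where "s = length idx"
  have idx: "idx ! k < length H" "used (idx ! k)" if "k < s" for k
  proof -
    have "idx ! k \<in> set idx" using that unfolding s_def by simp
    then show "idx ! k < length H" "used (idx ! k)" unfolding idx_def by auto
  qed
  have dist: "distinct idx" unfolding idx_def by simp
  have nz_used: "nzv m (H!i)" if "used i" for i
    using that unfolding used_def c'_def by (auto split: if_splits)
  define B where "B = mat m s (\<lambda>(t, k). (H ! (idx ! k)) t)"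
  define Xm where "Xm = mat n s (\<lambda>(j, k). X (idx ! k) j)"
  have B: "B \<in> carrier_mat m s" unfolding B_def by simp
  have Xm: "Xm \<in> carrier_mat n s" unfolding Xm_def by simp
  have BAX: "B = A * Xm"
  proof (rule eq_matI)
    fix t k assume t: "t < dim_row (A * Xm)" and k: "k < dim_col (A * Xm)"
    then have t': "t < m" and k': "k < s" using A Xm by auto
    have "(A * Xm) $$ (t, k) = (\<Sum>j<n. A $$ (t, j) * Xm $$ (j, k))"
      using mult_entry[OF A Xm t' k'] .
    also have "\<dots> = (\<Sum>j<n. X (idx ! k) j * (G ! j) t)"
      by (rule sum.cong[OF refl]) (use k' in \<open>simp add: Xm_def Gj mult.commute\<close>)
    also have "\<dots> = (H ! (idx ! k)) t" using X[OF idx(1)[OF k']] lenG unfolding plc_def by simp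
    finally show "B $$ (t, k) = (A * Xm) $$ (t, k)" unfolding B_def using t' k' by simp
  qed (use A Xm B in auto)
  have ker: "\<forall>w\<in>carrier_vec s. B *\<^sub>v w = 0\<^sub>v m \<longrightarrow> w = 0\<^sub>v s"
  proof (intro ballI impI, rule ccontr)
    fix w assume w: "w \<in> carrier_vec s" and Bw: "B *\<^sub>v w = 0\<^sub>v m" and w0: "w \<noteq> 0\<^sub>v s"
    then obtain k0 where k0: "k0 < s" "w $ k0 \<noteq> 0" using w by (auto simp: vec_eq_iff)
    define cw where "cw i = (\<Sum>k<s. if idx ! k = i then w $ k else 0)" for i
    have cwk0: "cw (idx ! k0) = w $ k0"
    proof -
      have "cw (idx ! k0) = (\<Sum>k<s. if k = k0 then w $ k else 0)"
        unfolding cw_def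
        by (rule sum.cong[OF refl]) (use k0 dist in \<open>auto simp: s_def nth_eq_iff_index_eq\<close>)
      also have "\<dots> = w $ k0" using k0 by simp
      finally show ?thesis .
    qed
    have zero: "(\<lambda>t. 0 :: 'a poly) t = plc cw H t" if t: "t < m" for t
    proof -
      have "plc cw H t = (\<Sum>i<length H. \<Sum>k<s. (if idx ! k = i then w $ k else 0) * (H!i) t)"
        unfolding plc_def cw_def by (simp add: sum_distrib_right)
      also have "\<dots> = (\<Sum>k<s. \<Sum>i<length H. (if idx ! k = i then w $ k else 0) * (H!i) t)"
        by (rule sum.swap)
      also have "\<dots> = (\<Sum>k<s. w $ k * (H ! (idx ! k)) t)"
      proof (rule sum.cong[OF refl])
        fix k assume "k \<in> {..<s}"
        then have k: "idx ! k < length H" using idx by auto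
        have "(\<Sum>i<length H. (if idx ! k = i then w $ k else 0) * (H!i) t) =
              (\<Sum>i<length H. if idx ! k = i then w $ k * (H!i) t else 0)"
          by (rule sum.cong) auto
        also have "\<dots> = w $ k * (H ! (idx ! k)) t" using k by (simp add: sum.delta)
        finally show "(\<Sum>i<length H. (if idx ! k = i then w $ k else 0) * (H!i) t) = w $ k * (H ! (idx ! k)) t" .
      qed
      also have "\<dots> = (B *\<^sub>v w) $ t"
        using t w unfolding B_def by (simp add: scalar_prod_def atLeast0LessThan mult.commute)
      also have "\<dots> = 0" using Bw t by simp
      finally show ?thesis by simp
    qed
    have "nzv m (\<lambda>t. 0 :: 'a poly)"
      using pd[OF cr idx(1)[OF k0(1)] nz_used[OF idx(2)[OF k0(1)]], of cw "\<lambda>t. 0"] cwk0 k0 zero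
      by auto
    then show False unfolding nzv_def by simp
  qed
  have "s = vec_space.rank m (map_mat to_fract B)"
    by (rule vec_space.rank_full_of_ker[symmetric]) (use B fract_kernel[OF B ker] in auto)
  also have "\<dots> = vec_space.rank m (map_mat to_fract A * map_mat to_fract Xm)"
    unfolding BAX map_mat_to_fract_mult[OF A Xm] ..
  also have "\<dots> \<le> vec_space.rank m (map_mat to_fract A)"
    by (rule vec_space.rank_mult_le) (use A Xm in auto)
  also have "\<dots> = normal_rank A" unfolding normal_rank_def using A by simp
  finally have sr: "s \<le> r" using rk by linarith
  define L where "L = mat m r (\<lambda>(t, k). if k < s then (H ! (idx ! k)) t else 0)"
  define R where "R = mat r n (\<lambda>(k, j). if k < s then c' j (idx ! k) else 0)"
  have L: "L \<in> carrier_mat m r" unfolding L_def by simp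
  have R: "R \<in> carrier_mat r n" unfolding R_def by simp
  have eq: "A = L * R"
  proof (rule eq_matI)
    fix t j assume t: "t < dim_row (L * R)" and j: "j < dim_col (L * R)"
    then have t': "t < m" and j': "j < n" using L R by auto
    have "(L * R) $$ (t, j) = (\<Sum>k<r. L $$ (t, k) * R $$ (k, j))" using mult_entry[OF L R t' j'] .
    also have "\<dots> = (\<Sum>k<s. L $$ (t, k) * R $$ (k, j))"
      by (rule sum.mono_neutral_right) (use sr in \<open>auto simp: L_def R_def t' j'\<close>)
    also have "\<dots> = (\<Sum>k<s. c' j (idx ! k) * (H ! (idx ! k)) t)"
      by (rule sum.cong[OF refl]) (use sr t' j' in \<open>auto simp: L_def R_def\<close>)
    also have "\<dots> = (\<Sum>i\<in>set idx. c' j i * (H ! i) t)"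
    proof -
      have "set idx = (\<lambda>k. idx ! k) ` {..<s}" unfolding s_def by (auto simp: in_set_conv_nth)
      moreover have "inj_on (\<lambda>k. idx ! k) {..<s}"
        using dist unfolding s_def by (auto simp: inj_on_def nth_eq_iff_index_eq)
      ultimately show ?thesis by (simp add: sum.reindex)
    qed
    also have "\<dots> = (\<Sum>i<length H. c' j i * (H ! i) t)"
      by (rule sum.mono_neutral_left) (use j' in \<open>auto simp: idx_def used_def\<close>)
    also have "\<dots> = A $$ (t, j)" using Aeq[OF t' j'] unfolding plc_def by simp
    finally show "A $$ (t, j) = (L * R) $$ (t, j)" by simp
  qed (use A L R in auto)
  have bounds: "\<exists>e\<le>d. (\<forall>t<m. degree (L $$ (t, k)) \<le> e) \<and> (\<forall>j<n. degree (R $$ (k, j)) \<le> d - e)"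
    if k: "k < r" for k
  proof (cases "k < s")
    case False
    then show ?thesis using k by (intro exI[of _ 0]) (auto simp: L_def R_def)
  next
    case True
    let ?i = "idx ! k"
    have i: "?i < length H" "used ?i" using idx True by auto
    then obtain j0 where j0: "j0 < n" "c' j0 ?i \<noteq> 0" unfolding used_def by auto
    have ed: "vdg m (H ! ?i) \<le> d" using PDc[OF j0(1) i(1) j0(2)] by linarith
    show ?thesis
    proof (intro exI conjI allI impI)
      show "vdg m (H ! ?i) \<le> d" by (rule ed)
      fix t assume "t < m"
      then show "degree (L $$ (t, k)) \<le> vdg m (H ! ?i)"
        using vdg_ge[of t m "H ! ?i"] True k unfolding L_def by simp
    next
      fix j assume j: "j < n"
      show "degree (R $$ (k, j)) \<le> d - vdg m (H ! ?i)"
      proof (cases "c' j ?i = 0")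
        case True then show ?thesis using k j \<open>k < s\<close> unfolding R_def by simp
      next
        case False
        then show ?thesis using PDc[OF j i(1) False] k j \<open>k < s\<close> unfolding R_def by simp
      qed
    qed
  qed
  show ?thesis using eq L R bounds by blast
qed



theorem theorem4p1:
  fixes m n r d :: nat
  assumes "m \<ge> 2" and "n \<ge> 2" and "d \<ge> 1" and "0 < r" and "r < min m n"
  shows "(poly_mats_dr m n d r :: 'a::field poly mat set) =
    {L * R | L R. L \<in> carrier_mat m r \<and> R \<in> carrier_mat r n \<and>
       (\<forall>i<r. vdeg (col L i) \<le> ereal (real d) \<and> vdeg (row R i) \<le> ereal (real d) \<and>
              vdeg (col L i) + vdeg (row R i) \<le> ereal (real d))}"
proof (intro equalityI subsetI)
  fix A :: "'a poly mat"
  assume "A \<in> poly_mats_dr m n d r"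
  then have A: "A \<in> carrier_mat m n" and md: "mdeg A \<le> ereal (real d)" and rk: "normal_rank A \<le> r"
    unfolding poly_mats_dr_def by auto
  have dA: "\<forall>t<m. \<forall>j<n. degree (A $$ (t, j)) \<le> d" using md A unfolding mdeg_le by auto
  obtain L R where eq: "A = L * R" and L: "L \<in> carrier_mat m r" and R: "R \<in> carrier_mat r n"
    and bnd: "\<forall>k<r. \<exists>e\<le>d. (\<forall>t<m. degree (L $$ (t, k)) \<le> e) \<and> (\<forall>j<n. degree (R $$ (k, j)) \<le> d - e)"
    using sub_dir[OF A dA rk] by blast
  have "\<forall>i<r. vdeg (col L i) \<le> ereal (real d) \<and> vdeg (row R i) \<le> ereal (real d) \<and>
              vdeg (col L i) + vdeg (row R i) \<le> ereal (real d)"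
  proof (intro allI impI)
    fix k assume k: "k < r"
    obtain e where e: "e \<le> d" and bL: "\<forall>t<m. degree (L $$ (t, k)) \<le> e"
      and bR: "\<forall>j<n. degree (R $$ (k, j)) \<le> d - e" using bnd k by blast
    have cL: "vdeg (col L k) \<le> ereal (real e)" unfolding vdeg_le using bL L k by auto
    have rR: "vdeg (row R k) \<le> ereal (real (d - e))" unfolding vdeg_le using bR R k by auto
    have "vdeg (col L k) + vdeg (row R k) \<le> ereal (real e) + ereal (real (d - e))"
      using cL rR by (rule add_mono)
    also have "\<dots> = ereal (real d)" using e by simp
    finally have s: "vdeg (col L k) + vdeg (row R k) \<le> ereal (real d)" .
    have "vdeg (col L k) \<le> ereal (real d)" using cL e by (meson order_trans ereal_less_eq(3) of_nat_le_iff)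
    moreover have "vdeg (row R k) \<le> ereal (real d)" using rR by (meson order_trans ereal_less_eq(3) of_nat_le_iff diff_le_self)
    ultimately show "vdeg (col L k) \<le> ereal (real d) \<and> vdeg (row R k) \<le> ereal (real d) \<and>
              vdeg (col L k) + vdeg (row R k) \<le> ereal (real d)" using s by blast
  qed
  then show "A \<in> {L * R | L R. L \<in> carrier_mat m r \<and> R \<in> carrier_mat r n \<and>
       (\<forall>i<r. vdeg (col L i) \<le> ereal (real d) \<and> vdeg (row R i) \<le> ereal (real d) \<and>
              vdeg (col L i) + vdeg (row R i) \<le> ereal (real d))}"
    using eq L R by blast
next
  fix A :: "'a poly mat"
  assume "A \<in> {L * R | L R. L \<in> carrier_mat m r \<and> R \<in> carrier_mat r n \<and>
       (\<forall>i<r. vdeg (col L i) \<le> ereal (real d) \<and> vdeg (row R i) \<le> ereal (real d) \<and>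
              vdeg (col L i) + vdeg (row R i) \<le> ereal (real d))}"
  then obtain L R where "A = L * R" "L \<in> carrier_mat m r" "R \<in> carrier_mat r n"
    "\<forall>i<r. vdeg (col L i) \<le> ereal (real d) \<and> vdeg (row R i) \<le> ereal (real d) \<and>
              vdeg (col L i) + vdeg (row R i) \<le> ereal (real d)" by blast
  then show "A \<in> poly_mats_dr m n d r" using sup_dir by blast
qed


end
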